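(* Let $\mathbf d$ be a graphical degree sequence on $[n]$ and let $H_1$ and $H_2$ be two edge-disjoint graphs on $[n]$; write $h=e(H_1)$. (a) If \[ \mathfrak{R}(\mathbf d, H_1,H_2):=\frac{6J(\mathbf d)+2\Delta(8+2\Delta(H_2))}{M-2e(H_1)}+ \frac{4e(H_2)\Delta^2}{(M-2e(H_1))^2}\le 1, \] then \[ \mathbb P\big(H_1^+\mid H_2^- \big) \le \prod_{i=1}^n (d_i)_{d_i^{H_1}}\cdot \prod_{j=1}^{h}\frac{1+\mathfrak{R}(\mathbf d, H_1, H_2)}{ M-2j+2}. \] (b) If \[ \mathfrak{r}(\mathbf d,H_1, H_2):=\frac{2J(\mathbf d)+6\Delta+2\Delta(H_2)\Delta+ \Delta_{\partial(H_1)}^2}{M-2e(H_1)} \le 1, \] then \[ \mathbb P\big(H_1^+\mid H_2^- \big)\ge \prod_{i=1}^n (d_i)_{d_i^{H_1}}\cdot \prod_{j=1}^{h}\frac{1-\mathfrak{r}(\mathbf d, H_1, H_2)}{ M-2j+2}. \]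
   Context: For a sequence $\mathbf d=(d_1,\ldots,d_n)$ of nonnegative integers, $\mathcal G(n,\mathbf d)$ denotes a uniformly random simple graph on $[n]$ in which vertex $i$ has degree $d_i$; $\mathbf d$ is graphical if such a graph exists. $\Delta=\max_i d_i$, $M=\sum_i d_i$, $J(\mathbf d)$ is the sum of the $\Delta$ largest entries of $\mathbf d$, and for $S\subseteq[n]$, $\Delta_S=\max_{i\in S}d_i$. For a graph $H$ on $[n]$, $e(H)$ is its number of edges, $\Delta(H)$ its maximum degree, $d^H_i$ the degree of $i$ in $H$, and $\partial(H)$ the set of vertices incident to at least one edge of $H$. Graphs on $[n]$ are identified with edge sets; disjoint means edge-disjoint. $H^+$ is the event $H\subseteq\mathcal G(n,\mathbf d)$ and $H^-$ the event that $\mathcal G(n,\mathbf d)$ contains no edge of $H$. $(x)_k=x(x-1)\cdots(x-k+1)$ denotes the falling factorial. *)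

theory Defs
  imports Complex_Main
begin

text \<open>Simple graphs on the vertex set [n] = {1..n}, identified with their edge sets:
  sets of 2-element subsets of {1..n}.\<close>

definition all_edges :: "nat \<Rightarrow> nat set set" where
  "all_edges n = {e. e \<subseteq> {1..n} \<and> card e = 2}"

definition graph_on :: "nat \<Rightarrow> nat set set \<Rightarrow> bool" where
  "graph_on n G \<longleftrightarrow> G \<subseteq> all_edges n"

definition vdeg :: "nat set set \<Rightarrow> nat \<Rightarrow> nat" where
  "vdeg G i = card {e \<in> G. i \<in> e}"

definition num_edges :: "nat set set \<Rightarrow> nat" where
  "num_edges G = card G"

definition max_deg :: "nat \<Rightarrow> nat set set \<Rightarrow> nat" where
  "max_deg n G = Max (insert 0 (vdeg G ` {1..n}))"

definition touched :: "nat set set \<Rightarrow> nat set" where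
  "touched G = \<Union> G"

definition graphs_deg :: "nat \<Rightarrow> (nat \<Rightarrow> nat) \<Rightarrow> nat set set set" where
  "graphs_deg n d = {G. graph_on n G \<and> (\<forall>i\<in>{1..n}. vdeg G i = d i)}"

definition graphical :: "nat \<Rightarrow> (nat \<Rightarrow> nat) \<Rightarrow> bool" where
  "graphical n d \<longleftrightarrow> graphs_deg n d \<noteq> {}"

definition dmax :: "nat \<Rightarrow> (nat \<Rightarrow> nat) \<Rightarrow> nat" where
  "dmax n d = Max (insert 0 (d ` {1..n}))"

definition dmax_on :: "(nat \<Rightarrow> nat) \<Rightarrow> nat set \<Rightarrow> nat" where
  "dmax_on d S = Max (insert 0 (d ` S))"

definition dsum :: "nat \<Rightarrow> (nat \<Rightarrow> nat) \<Rightarrow> nat" where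
  "dsum n d = (\<Sum>i\<in>{1..n}. d i)"

definition Jd :: "nat \<Rightarrow> (nat \<Rightarrow> nat) \<Rightarrow> nat" where
  "Jd n d = sum_list (take (dmax n d) (rev (sort (map d [1..<n+1]))))"

definition ffall :: "nat \<Rightarrow> nat \<Rightarrow> real" where
  "ffall x k = (\<Prod>i<k. real x - real i)"

definition cond_prob :: "nat \<Rightarrow> (nat \<Rightarrow> nat) \<Rightarrow> nat set set \<Rightarrow> nat set set \<Rightarrow> real" where
  "cond_prob n d H1 H2 =
     real (card {G \<in> graphs_deg n d. H1 \<subseteq> G \<and> G \<inter> H2 = {}})
     / real (card {G \<in> graphs_deg n d. G \<inter> H2 = {}})"

definition bigR :: "nat \<Rightarrow> (nat \<Rightarrow> nat) \<Rightarrow> nat set set \<Rightarrow> nat set set \<Rightarrow> real" where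
  "bigR n d H1 H2 =
     (6 * real (Jd n d) + 2 * real (dmax n d) * (8 + 2 * real (max_deg n H2)))
       / (real (dsum n d) - 2 * real (num_edges H1))
   + 4 * real (num_edges H2) * real (dmax n d) ^ 2
       / (real (dsum n d) - 2 * real (num_edges H1)) ^ 2"

definition smallr :: "nat \<Rightarrow> (nat \<Rightarrow> nat) \<Rightarrow> nat set set \<Rightarrow> nat set set \<Rightarrow> real" where
  "smallr n d H1 H2 =
     (2 * real (Jd n d) + 6 * real (dmax n d) + 2 * real (max_deg n H2) * real (dmax n d)
        + real (dmax_on d (touched H1)) ^ 2)
       / (real (dsum n d) - 2 * real (num_edges H1))"

end

theory Submission
  imports Defs "HOL-Library.Multiset"
begin


lemma J_aux:
  fixes B :: "nat multiset"
  shows "A \<subseteq># B \<Longrightarrow> size A \<le> k \<Longrightarrow> sum_mset A \<le> sum_list (take k (rev (sorted_list_of_multiset B)))"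
proof (induction B arbitrary: A k rule: multiset_induct_max)
  case empty
  then show ?case by simp
next
  case (add x M)
  have srt: "sorted_list_of_multiset (add_mset x M) = sorted_list_of_multiset M @ [x]"
    using add.hyps by (simp add: sorted_insort_is_snoc)
  show ?case
  proof (cases k)
    case 0
    then show ?thesis using add.prems by simp
  next
    case (Suc k')
    have eq: "sum_list (take k (rev (sorted_list_of_multiset (add_mset x M))))
       = x + sum_list (take k' (rev (sorted_list_of_multiset M)))"
      using Suc srt by simp
    show ?thesis
    proof (cases "x \<in># A")
      case True
      have s1: "A - {#x#} \<subseteq># M" using add.prems(1) True
        by (metis insert_DiffM subset_mset.add_le_cancel_left add_mset_add_single union_commute)
      have s2: "size (A - {#x#}) \<le> k'" using add.prems(2) True Suc
        by (simp add: size_Diff_singleton)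
      have "sum_mset (A - {#x#}) \<le> sum_list (take k' (rev (sorted_list_of_multiset M)))"
        by (rule add.IH[OF s1 s2])
      moreover have "sum_mset A = x + sum_mset (A - {#x#})" using True
        by (rule sum_mset.remove)
      ultimately have "sum_mset A \<le> x + sum_list (take k' (rev (sorted_list_of_multiset M)))"
        by (metis add_le_cancel_left)
      then show ?thesis unfolding eq .
    next
      case False
      have AM: "A \<subseteq># M"
        unfolding subseteq_mset_def
      proof (intro allI)
        fix a
        show "count A a \<le> count M a"
        proof (cases "a = x")
          case True then show ?thesis using False by (simp add: not_in_iff)
        next
          case False
          then show ?thesis using mset_subset_eq_count[OF add.prems(1), of a] by simp
        qed
      qed
      show ?thesis
      proof (cases "A = {#}")
        case True then show ?thesis by simp
      next
        case False
        then obtain y where y: "y \<in># A" by (meson multiset_nonemptyE)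
        have yx: "y \<le> x" using add.hyps AM y by (meson mset_subset_eqD)
        have s1: "A - {#y#} \<subseteq># M" using AM by (meson diff_subset_eq_self subset_mset.order_trans)
        have s2: "size (A - {#y#}) \<le> k'" using add.prems(2) y Suc
          by (simp add: size_Diff_singleton)
        have "sum_mset (A - {#y#}) \<le> sum_list (take k' (rev (sorted_list_of_multiset M)))"
          by (rule add.IH[OF s1 s2])
        moreover have "sum_mset A = y + sum_mset (A - {#y#})" using y
          by (rule sum_mset.remove)
        ultimately have "sum_mset A \<le> x + sum_list (take k' (rev (sorted_list_of_multiset M)))"
          using yx by (metis add_mono)
        then show ?thesis unfolding eq .
      qed
    qed
  qed
qed

lemma J_bound:
  assumes "X \<subseteq> {1..n}" "card X \<le> dmax n d"
  shows "(\<Sum>u\<in>X. d u) \<le> Jd n d"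
proof -
  have fin: "finite X" using assms(1) finite_subset by blast
  have "image_mset d (mset_set X) \<subseteq># image_mset d (mset_set {1..n})"
    using assms(1) by (intro image_mset_subseteq_mono) (simp add: fin)
  moreover have "mset (map d [1..<n+1]) = image_mset d (mset_set {1..n})"
    by (metis atLeastLessThanSuc_atLeastAtMost mset_map mset_upt Suc_eq_plus1)
  ultimately have "sum_mset (image_mset d (mset_set X)) \<le> sum_list (take (dmax n d) (rev (sorted_list_of_multiset (mset (map d [1..<n+1])))))"
    using assms(2) by (intro J_aux) auto
  moreover have "(\<Sum>u\<in>X. d u) = sum_mset (image_mset d (mset_set X))"
    by (simp add: sum_unfold_sum_mset)
  ultimately show ?thesis unfolding Jd_def sorted_list_of_multiset_mset by simp
qed


definition OE :: "nat set set \<Rightarrow> (nat \<times> nat) set" where "OE F = {(u,v). {u,v} \<in> F}"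
definition nb :: "nat set set \<Rightarrow> nat \<Rightarrow> nat set" where "nb F x = {w. {x,w} \<in> F}"

lemma fin_all_edges: "finite (all_edges n)"
proof -
  have "all_edges n \<subseteq> Pow {1..n}" unfolding all_edges_def by auto
  then show ?thesis by (rule finite_subset) simp
qed

lemma fin_graph: "F \<subseteq> all_edges n \<Longrightarrow> finite F"
  using fin_all_edges finite_subset by blast

lemma edge_mem: "e \<in> all_edges n \<Longrightarrow> \<exists>u v. e = {u,v} \<and> u \<noteq> v \<and> u \<in> {1..n} \<and> v \<in> {1..n}"
proof -
  assume "e \<in> all_edges n"
  then have e: "e \<subseteq> {1..n}" "card e = 2" unfolding all_edges_def by auto
  then obtain u v where "e = {u,v}" "u \<noteq> v" by (meson card_2_iff)
  then show ?thesis using e by auto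
qed

lemma pair_in_all_edges: "{u,v} \<in> all_edges n \<longleftrightarrow> u \<noteq> v \<and> u \<in> {1..n} \<and> v \<in> {1..n}"
  unfolding all_edges_def by (auto simp: card_insert_if)

lemma OE_mem: "F \<subseteq> all_edges n \<Longrightarrow> (u,v) \<in> OE F \<Longrightarrow> u \<noteq> v \<and> u \<in> {1..n} \<and> v \<in> {1..n}"
  unfolding OE_def using pair_in_all_edges by blast

lemma nb_sub: "F \<subseteq> all_edges n \<Longrightarrow> nb F x \<subseteq> {1..n}"
  unfolding nb_def using pair_in_all_edges by blast

lemma card_nb: assumes "F \<subseteq> all_edges n" shows "card (nb F x) = vdeg F x"
proof -
  have "bij_betw (\<lambda>w. {x,w}) (nb F x) {e\<in>F. x \<in> e}"
  proof (rule bij_betwI')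
    show "\<And>w w'. w \<in> nb F x \<Longrightarrow> w' \<in> nb F x \<Longrightarrow> ({x, w} = {x, w'}) = (w = w')"
      by (metis doubleton_eq_iff)
    show "\<And>w. w \<in> nb F x \<Longrightarrow> {x, w} \<in> {e \<in> F. x \<in> e}" unfolding nb_def by auto
    show "\<exists>w\<in>nb F x. e = {x, w}" if "e \<in> {e \<in> F. x \<in> e}" for e
    proof -
      from that have eF: "e \<in> F" "x \<in> e" by auto
      then obtain u v where "e = {u,v}" "u \<noteq> v" using assms edge_mem by blast
      then show ?thesis using eF unfolding nb_def by (metis insert_commute empty_iff insertE mem_Collect_eq)
    qed
  qed
  then show ?thesis unfolding vdeg_def by (simp add: bij_betw_same_card)
qed

lemma fin_nb: "F \<subseteq> all_edges n \<Longrightarrow> finite (nb F x)"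
  by (rule finite_subset[OF nb_sub]) auto

lemma OE_fst: "{p \<in> OE F. fst p \<in> X} = Sigma X (nb F)"
  unfolding OE_def nb_def by auto

lemma OE_snd: "{p \<in> OE F. snd p \<in> X} = prod.swap ` Sigma X (nb F)"
proof
  show "{p \<in> OE F. snd p \<in> X} \<subseteq> prod.swap ` Sigma X (nb F)"
  proof
    fix p assume p: "p \<in> {p \<in> OE F. snd p \<in> X}"
    obtain u v where uv: "p = (u,v)" by fastforce
    have "(v,u) \<in> Sigma X (nb F)" using p uv unfolding OE_def nb_def by (simp add: insert_commute)
    then show "p \<in> prod.swap ` Sigma X (nb F)" using uv by force
  qed
  show "prod.swap ` Sigma X (nb F) \<subseteq> {p \<in> OE F. snd p \<in> X}"
    unfolding OE_def nb_def by (auto simp: insert_commute)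
qed

lemma card_OE_fst: assumes "F \<subseteq> all_edges n" "finite X"
  shows "card {p \<in> OE F. fst p \<in> X} = (\<Sum>u\<in>X. vdeg F u)"
  unfolding OE_fst using assms by (simp add: card_nb fin_nb)

lemma card_OE_snd: assumes "F \<subseteq> all_edges n" "finite X"
  shows "card {p \<in> OE F. snd p \<in> X} = (\<Sum>u\<in>X. vdeg F u)"
proof -
  have "card {p \<in> OE F. snd p \<in> X} = card (Sigma X (nb F))"
    unfolding OE_snd by (rule card_image) (simp add: swap_inj_on)
  then show ?thesis using assms by (simp add: card_nb fin_nb)
qed

lemma vdeg_out: assumes "F \<subseteq> all_edges n" "u \<notin> {1..n}" shows "vdeg F u = 0"
proof -
  have "{e \<in> F. u \<in> e} = {}" using assms unfolding all_edges_def by blast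
  then show ?thesis unfolding vdeg_def by (metis card.empty)
qed

lemma card_OE: assumes "F \<subseteq> all_edges n"
  shows "card (OE F) = (\<Sum>u\<in>{1..n}. vdeg F u)"
proof -
  have "OE F = {p \<in> OE F. fst p \<in> {1..n}}" using OE_mem[OF assms] by auto
  then show ?thesis using card_OE_fst[OF assms, of "{1..n}"] by simp
qed

lemma handshake: assumes "F \<subseteq> all_edges n"
  shows "(\<Sum>u\<in>{1..n}. vdeg F u) = 2 * card F"
proof -
  have fF: "finite F" using assms fin_graph by blast
  have "(\<Sum>u\<in>{1..n}. vdeg F u) = (\<Sum>u\<in>{1..n}. \<Sum>e\<in>F. if u \<in> e then 1 else 0)"
    unfolding vdeg_def using fF by (simp add: sum.inter_filter[symmetric])
  also have "\<dots> = (\<Sum>e\<in>F. \<Sum>u\<in>{1..n}. if u \<in> e then 1 else 0)"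
    by (rule sum.swap)
  also have "\<dots> = (\<Sum>e\<in>F. 2)"
  proof (rule sum.cong)
    fix e assume "e \<in> F"
    then have e: "e \<subseteq> {1..n}" "card e = 2" using assms unfolding all_edges_def by auto
    have "(\<Sum>u\<in>{1..n}. if u \<in> e then 1 else 0) = card {u \<in> {1..n}. u \<in> e}"
      by (simp add: sum.inter_filter[symmetric])
    also have "{u \<in> {1..n}. u \<in> e} = e" using e by auto
    finally show "(\<Sum>u\<in>{1..n}. if u \<in> e then (1::nat) else 0) = 2" using e by simp
  qed simp
  finally show ?thesis by simp
qed

lemma card_OE2: "F \<subseteq> all_edges n \<Longrightarrow> card (OE F) = 2 * card F"
  using card_OE handshake by metis

lemma fin_OE: assumes "F \<subseteq> all_edges n" shows "finite (OE F)"
proof -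
  have "OE F \<subseteq> {1..n} \<times> {1..n}" using OE_mem[OF assms] by auto
  then show ?thesis using finite_subset by blast
qed

lemma vdeg_mono: "F \<subseteq> G \<Longrightarrow> finite G \<Longrightarrow> vdeg F u \<le> vdeg G u"
  unfolding vdeg_def by (rule card_mono) auto

lemma vdeg_diff: assumes "K \<subseteq> G" "finite G" shows "vdeg (G - K) u = vdeg G u - vdeg K u"
proof -
  have "{e \<in> G - K. u \<in> e} = {e \<in> G. u \<in> e} - {e \<in> K. u \<in> e}" by auto
  moreover have "{e \<in> K. u \<in> e} \<subseteq> {e \<in> G. u \<in> e}" using assms by auto
  ultimately show ?thesis unfolding vdeg_def using assms
    by (simp add: card_Diff_subset finite_subset)
qed

lemma vdeg_switch:
  assumes "finite G" "R \<subseteq> G" "Ad \<inter> G = {}" "finite Ad"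
    and "card {e \<in> R. z \<in> e} = card {e \<in> Ad. z \<in> e}"
  shows "vdeg ((G - R) \<union> Ad) z = vdeg G z"
proof -
  have eq: "{e \<in> (G - R) \<union> Ad. z \<in> e} = ({e \<in> G. z \<in> e} - {e \<in> R. z \<in> e}) \<union> {e \<in> Ad. z \<in> e}"
    by auto
  have fR: "finite R" using assms finite_subset by blast
  have "card {e \<in> (G - R) \<union> Ad. z \<in> e} = card ({e \<in> G. z \<in> e} - {e \<in> R. z \<in> e}) + card {e \<in> Ad. z \<in> e}"
    unfolding eq using assms by (intro card_Un_disjoint) auto
  also have "card ({e \<in> G. z \<in> e} - {e \<in> R. z \<in> e}) = card {e \<in> G. z \<in> e} - card {e \<in> R. z \<in> e}"
    using assms fR by (intro card_Diff_subset) auto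
  also have "card {e \<in> R. z \<in> e} \<le> card {e \<in> G. z \<in> e}"
    using assms by (intro card_mono) auto
  ultimately show ?thesis unfolding vdeg_def using assms(5) by simp
qed

lemma card_filter_sum: "finite A \<Longrightarrow> card {e \<in> A. z \<in> e} = (\<Sum>e\<in>A. of_bool (z \<in> e))"
  by (simp add: sum.inter_filter[symmetric] of_bool_def)

lemma card_filter3:
  assumes "e1 \<noteq> e2" "e1 \<noteq> e3" "e2 \<noteq> e3"
  shows "card {e \<in> {e1,e2,e3}. z \<in> e} = of_bool (z \<in> e1) + of_bool (z \<in> e2) + of_bool (z \<in> e3)"
  using assms by (subst card_filter_sum) simp_all

lemma card_filter2:
  assumes "e1 \<noteq> e2"
  shows "card {e \<in> {e1,e2}. z \<in> e} = of_bool (z \<in> e1) + of_bool (z \<in> e2)"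
  using assms by (subst card_filter_sum) simp_all

lemma of_bool_pair: "p \<noteq> q \<Longrightarrow> (of_bool (z \<in> {p,q}) :: nat) = of_bool (z = p) + of_bool (z = q)"
  by auto


lemma double_count:
  assumes "finite X" "finite Y" "\<And>x. x \<in> X \<Longrightarrow> finite (T x)"
    and "\<And>x t. x \<in> X \<Longrightarrow> t \<in> T x \<Longrightarrow> f x t \<in> Y"
  shows "(\<Sum>x\<in>X. card (T x)) = (\<Sum>y\<in>Y. card {q \<in> Sigma X T. f (fst q) (snd q) = y})"
proof -
  have fS: "finite (Sigma X T)" using assms by auto
  have "(\<Sum>y\<in>Y. \<Sum>q | q \<in> Sigma X T \<and> (\<lambda>q. f (fst q) (snd q)) q = y. (1::nat)) = (\<Sum>q\<in>Sigma X T. 1)"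
    by (rule sum.group[OF fS assms(2)]) (use assms(4) in auto)
  then have "(\<Sum>y\<in>Y. card {q \<in> Sigma X T. f (fst q) (snd q) = y}) = card (Sigma X T)"
    by simp
  also have "\<dots> = (\<Sum>x\<in>X. card (T x))" using assms by simp
  finally show ?thesis by simp
qed

lemma dmax_ge: "u \<in> {1..n} \<Longrightarrow> d u \<le> dmax n d"
  unfolding dmax_def by (intro Max_ge) auto

lemma max_deg_ge: "u \<in> {1..n} \<Longrightarrow> vdeg H u \<le> max_deg n H"
  unfolding max_deg_def by (intro Max_ge) auto

lemma max_deg_ge': assumes "H \<subseteq> all_edges n" shows "vdeg H u \<le> max_deg n H"
  using max_deg_ge vdeg_out[OF assms] by (cases "u \<in> {1..n}") auto

lemma recover: "R \<subseteq> G \<Longrightarrow> Ad \<inter> G = {} \<Longrightarrow> (((G - R) \<union> Ad) - Ad) \<union> R = G"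
  by blast

locale swsetup =
  fixes n :: nat and d :: "nat \<Rightarrow> nat" and H2 K :: "nat set set" and a b :: nat
  assumes H2g: "H2 \<subseteq> all_edges n" and Kg: "K \<subseteq> all_edges n" and KH: "K \<inter> H2 = {}"
    and ab: "{a,b} \<in> all_edges n" and abK: "{a,b} \<notin> K" and abH: "{a,b} \<notin> H2"
begin

definition "CC = {G \<in> graphs_deg n d. K \<subseteq> G \<and> G \<inter> H2 = {}}"
definition "AA = {G \<in> CC. {a,b} \<in> G}"
definition "BB = {G \<in> CC. {a,b} \<notin> G}"
definition "Mp = real (dsum n d) - 2 * real (card K)"

lemma a_ne_b: "a \<noteq> b" and a_in: "a \<in> {1..n}" and b_in: "b \<in> {1..n}"
  using ab pair_in_all_edges by blast+

lemma CC_fin: "finite CC"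
proof -
  have "CC \<subseteq> Pow (all_edges n)" unfolding CC_def graphs_deg_def graph_on_def by auto
  then show ?thesis using fin_all_edges finite_subset by blast
qed

lemma AA_fin: "finite AA" and BB_fin: "finite BB"
  using CC_fin unfolding AA_def BB_def by auto

lemma CC_split: "card CC = card AA + card BB"
proof -
  have "CC = AA \<union> BB" "AA \<inter> BB = {}" unfolding AA_def BB_def by auto
  then show ?thesis using AA_fin BB_fin by (simp add: card_Un_disjoint)
qed

lemma CC_props:
  assumes "G \<in> CC"
  shows "G \<subseteq> all_edges n" "finite G" "\<And>u. u \<in> {1..n} \<Longrightarrow> vdeg G u = d u" "K \<subseteq> G" "G \<inter> H2 = {}"
  using assms fin_graph unfolding CC_def graphs_deg_def graph_on_def by auto

lemma dsum_eq: assumes "G \<in> CC" shows "dsum n d = 2 * card G"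
proof -
  have "dsum n d = (\<Sum>u\<in>{1..n}. vdeg G u)" unfolding dsum_def using CC_props(3)[OF assms] by simp
  then show ?thesis using handshake CC_props(1)[OF assms] by simp
qed

lemma GK_sub: "G \<in> CC \<Longrightarrow> G - K \<subseteq> all_edges n"
  using CC_props(1) by blast

lemma card_OE_GK: assumes "G \<in> CC" shows "real (card (OE (G - K))) = Mp"
proof -
  have "card (OE (G - K)) = 2 * card (G - K)" using card_OE2 GK_sub[OF assms] by blast
  also have "card (G - K) = card G - card K" using CC_props[OF assms] by (simp add: card_Diff_subset finite_subset)
  also have "card K \<le> card G" using CC_props[OF assms] by (simp add: card_mono)
  ultimately show ?thesis unfolding Mp_def using dsum_eq[OF assms] by simp
qed

lemma vdeg_le_d: assumes "G \<in> CC" "F \<subseteq> G" shows "vdeg F u \<le> d u"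
proof (cases "u \<in> {1..n}")
  case True
  then show ?thesis using vdeg_mono[OF assms(2) CC_props(2)[OF assms(1)], of u] CC_props(3)[OF assms(1) True] by simp
next
  case False
  then show ?thesis using vdeg_out[of F n u] assms CC_props(1)[OF assms(1)] by simp
qed

lemma vdeg_le_D: assumes "G \<in> CC" "F \<subseteq> G" shows "vdeg F u \<le> dmax n d"
proof (cases "u \<in> {1..n}")
  case True
  then show ?thesis using vdeg_le_d[OF assms, of u] dmax_ge[OF True, of d] by simp
next
  case False
  then show ?thesis using vdeg_out[of F n u] assms CC_props(1)[OF assms(1)] by simp
qed

lemma bad_single_fst: assumes "G \<in> CC" "F \<subseteq> G"
  shows "card {p \<in> OE F. fst p \<in> {x}} \<le> dmax n d"
  using card_OE_fst[of F n "{x}"] assms CC_props(1)[OF assms(1)] vdeg_le_D[OF assms] by auto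

lemma bad_single_snd: assumes "G \<in> CC" "F \<subseteq> G"
  shows "card {p \<in> OE F. snd p \<in> {x}} \<le> dmax n d"
  using card_OE_snd[of F n "{x}"] assms CC_props(1)[OF assms(1)] vdeg_le_D[OF assms] by auto

lemma sum_nb_le_J: assumes "G \<in> CC" "F \<subseteq> G"
  shows "(\<Sum>u\<in>nb G x. vdeg F u) \<le> Jd n d"
proof -
  have gs: "G \<subseteq> all_edges n" using CC_props(1)[OF assms(1)] .
  have "(\<Sum>u\<in>nb G x. vdeg F u) \<le> (\<Sum>u\<in>nb G x. d u)"
    by (intro sum_mono vdeg_le_d[OF assms])
  also have "\<dots> \<le> Jd n d"
  proof (rule J_bound)
    show "nb G x \<subseteq> {1..n}" using nb_sub[OF gs] .
    have "card (nb G x) = vdeg G x" using card_nb[OF gs] .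
    also have "\<dots> \<le> dmax n d" using vdeg_le_D[OF assms(1), of G] by simp
    finally show "card (nb G x) \<le> dmax n d" .
  qed
  finally show ?thesis .
qed

lemma bad_nb_fst: assumes "G \<in> CC" "F \<subseteq> G"
  shows "card {p \<in> OE F. fst p \<in> nb G x} \<le> Jd n d"
proof -
  have Fs: "F \<subseteq> all_edges n" using assms(2) CC_props(1)[OF assms(1)] by blast
  have "card {p \<in> OE F. fst p \<in> nb G x} = (\<Sum>u\<in>nb G x. vdeg F u)"
    by (rule card_OE_fst[OF Fs fin_nb[OF CC_props(1)[OF assms(1)]]])
  then show ?thesis using sum_nb_le_J[OF assms] by simp
qed

lemma bad_nb_snd: assumes "G \<in> CC" "F \<subseteq> G"
  shows "card {p \<in> OE F. snd p \<in> nb G x} \<le> Jd n d"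
proof -
  have Fs: "F \<subseteq> all_edges n" using assms(2) CC_props(1)[OF assms(1)] by blast
  have "card {p \<in> OE F. snd p \<in> nb G x} = (\<Sum>u\<in>nb G x. vdeg F u)"
    by (rule card_OE_snd[OF Fs fin_nb[OF CC_props(1)[OF assms(1)]]])
  then show ?thesis using sum_nb_le_J[OF assms] by simp
qed

lemma sum_nbH_le: assumes "G \<in> CC" "F \<subseteq> G"
  shows "(\<Sum>u\<in>nb H2 x. vdeg F u) \<le> max_deg n H2 * dmax n d"
proof -
  have "(\<Sum>u\<in>nb H2 x. vdeg F u) \<le> (\<Sum>u\<in>nb H2 x. dmax n d)"
    by (intro sum_mono vdeg_le_D[OF assms])
  also have "\<dots> = card (nb H2 x) * dmax n d" by simp
  also have "card (nb H2 x) = vdeg H2 x" using card_nb[OF H2g] .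
  also have "vdeg H2 x \<le> max_deg n H2" using max_deg_ge'[OF H2g] .
  finally show ?thesis by simp
qed

lemma bad_nbH_fst: assumes "G \<in> CC" "F \<subseteq> G"
  shows "card {p \<in> OE F. fst p \<in> nb H2 x} \<le> max_deg n H2 * dmax n d"
proof -
  have Fs: "F \<subseteq> all_edges n" using assms(2) CC_props(1)[OF assms(1)] by blast
  have "card {p \<in> OE F. fst p \<in> nb H2 x} = (\<Sum>u\<in>nb H2 x. vdeg F u)"
    by (rule card_OE_fst[OF Fs fin_nb[OF H2g]])
  then show ?thesis using sum_nbH_le[OF assms] by simp
qed

lemma bad_nbH_snd: assumes "G \<in> CC" "F \<subseteq> G"
  shows "card {p \<in> OE F. snd p \<in> nb H2 x} \<le> max_deg n H2 * dmax n d"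
proof -
  have Fs: "F \<subseteq> all_edges n" using assms(2) CC_props(1)[OF assms(1)] by blast
  have "card {p \<in> OE F. snd p \<in> nb H2 x} = (\<Sum>u\<in>nb H2 x. vdeg F u)"
    by (rule card_OE_snd[OF Fs fin_nb[OF H2g]])
  then show ?thesis using sum_nbH_le[OF assms] by simp
qed

lemma card_nbGK: assumes "G \<in> CC" "u \<in> {1..n}" shows "card (nb (G - K) u) = d u - vdeg K u"
  using card_nb[OF GK_sub[OF assms(1)]] vdeg_diff[OF CC_props(4,2)[OF assms(1)]] CC_props(3)[OF assms(1) assms(2)]
  by simp

lemma card_diff_bads:
  assumes "finite Ob" "B1 \<subseteq> Ob" "B2 \<subseteq> Ob" "B3 \<subseteq> Ob" "B4 \<subseteq> Ob" "B5 \<subseteq> Ob" "B6 \<subseteq> Ob"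
  shows "real (card (Ob - (B1 \<union> B2 \<union> B3 \<union> B4 \<union> B5 \<union> B6))) \<ge>
     real (card Ob) - real (card B1) - real (card B2) - real (card B3) - real (card B4) - real (card B5) - real (card B6)"
proof -
  let ?U = "B1 \<union> B2 \<union> B3 \<union> B4 \<union> B5 \<union> B6"
  have U: "?U \<subseteq> Ob" using assms by auto
  have "card Ob = card (Ob - ?U) + card ?U"
    using card_Diff_subset[OF finite_subset[OF U assms(1)] U] card_mono[OF assms(1) U] by simp
  moreover have "card ?U \<le> card B1 + card B2 + card B3 + card B4 + card B5 + card B6"
    using card_Un_le[of "B1 \<union> B2 \<union> B3 \<union> B4 \<union> B5" B6] card_Un_le[of "B1 \<union> B2 \<union> B3 \<union> B4" B5]
      card_Un_le[of "B1 \<union> B2 \<union> B3" B4] card_Un_le[of "B1 \<union> B2" B3] card_Un_le[of B1 B2] by linarith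
  ultimately show ?thesis by linarith
qed

end


context swsetup begin

definition "fw2 G = {p \<in> OE (G - K). fst p \<noteq> a \<and> snd p \<noteq> b \<and> {a, fst p} \<notin> G \<and> {b, snd p} \<notin> G
   \<and> {a, fst p} \<notin> H2 \<and> {b, snd p} \<notin> H2}"
definition "sw2 G p = (G - {{a,b},{fst p, snd p}}) \<union> {{a, fst p},{b, snd p}}"

lemma fw2_sub: "fw2 G \<subseteq> OE (G - K)" unfolding fw2_def by auto

lemma fw2_lower:
  assumes G: "G \<in> AA"
  shows "real (card (fw2 G)) \<ge> Mp - (2 * real (Jd n d) + 2 * real (dmax n d) + 2 * real (max_deg n H2) * real (dmax n d))"
proof -
  have GC: "G \<in> CC" using G unfolding AA_def by auto
  let ?Ob = "OE (G - K)"
  have FG: "G - K \<subseteq> G" by auto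
  have fin: "finite ?Ob" using fin_OE[OF GK_sub[OF GC]] .
  let ?B1 = "{p \<in> ?Ob. fst p \<in> {a}}"
  let ?B2 = "{p \<in> ?Ob. fst p \<in> nb G a}"
  let ?B3 = "{p \<in> ?Ob. snd p \<in> {b}}"
  let ?B4 = "{p \<in> ?Ob. snd p \<in> nb G b}"
  let ?B5 = "{p \<in> ?Ob. fst p \<in> nb H2 a}"
  let ?B6 = "{p \<in> ?Ob. snd p \<in> nb H2 b}"
  have sub: "?Ob - (?B1 \<union> ?B2 \<union> ?B3 \<union> ?B4 \<union> ?B5 \<union> ?B6) \<subseteq> fw2 G"
    unfolding fw2_def nb_def by auto
  have "real (card (?Ob - (?B1 \<union> ?B2 \<union> ?B3 \<union> ?B4 \<union> ?B5 \<union> ?B6))) \<le> real (card (fw2 G))"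
    using card_mono[OF finite_subset[OF fw2_sub fin] sub] by simp
  moreover have "real (card ?Ob) - real (card ?B1) - real (card ?B2) - real (card ?B3) - real (card ?B4) - real (card ?B5) - real (card ?B6)
     \<le> real (card (?Ob - (?B1 \<union> ?B2 \<union> ?B3 \<union> ?B4 \<union> ?B5 \<union> ?B6)))"
    by (rule card_diff_bads[OF fin]) auto
  moreover have "real (card ?Ob) = Mp" using card_OE_GK[OF GC] .
  moreover have "real (card ?B1) \<le> real (dmax n d)" using bad_single_fst[OF GC FG] by simp
  moreover have "real (card ?B3) \<le> real (dmax n d)" using bad_single_snd[OF GC FG] by simp
  moreover have "real (card ?B2) \<le> real (Jd n d)" using bad_nb_fst[OF GC FG] by simp
  moreover have "real (card ?B4) \<le> real (Jd n d)" using bad_nb_snd[OF GC FG] by simp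
  moreover have "real (card ?B5) \<le> real (max_deg n H2) * real (dmax n d)"
    using bad_nbH_fst[OF GC FG] by (metis of_nat_le_iff of_nat_mult)
  moreover have "real (card ?B6) \<le> real (max_deg n H2) * real (dmax n d)"
    using bad_nbH_snd[OF GC FG] by (metis of_nat_le_iff of_nat_mult)
  ultimately show ?thesis by linarith
qed

lemma fw2_facts:
  assumes G: "G \<in> AA" and p: "p \<in> fw2 G"
  shows "{fst p, snd p} \<in> G" "{fst p, snd p} \<notin> K" "fst p \<noteq> snd p" "fst p \<in> {1..n}" "snd p \<in> {1..n}"
    "fst p \<noteq> a" "snd p \<noteq> b" "fst p \<noteq> b" "snd p \<noteq> a" "{a, fst p} \<notin> G" "{b, snd p} \<notin> G"
    "{a, fst p} \<notin> H2" "{b, snd p} \<notin> H2"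
proof -
  have GC: "G \<in> CC" using G unfolding AA_def by auto
  have abG: "{a,b} \<in> G" using G unfolding AA_def by auto
  have o: "(fst p, snd p) \<in> OE (G - K)" using p unfolding fw2_def by auto
  then show "{fst p, snd p} \<in> G" "{fst p, snd p} \<notin> K" unfolding OE_def by auto
  show "fst p \<noteq> snd p" "fst p \<in> {1..n}" "snd p \<in> {1..n}" using OE_mem[OF GK_sub[OF GC] o] by auto
  show "fst p \<noteq> a" "snd p \<noteq> b" "{a, fst p} \<notin> G" "{b, snd p} \<notin> G" "{a, fst p} \<notin> H2" "{b, snd p} \<notin> H2"
    using p unfolding fw2_def by auto
  show "fst p \<noteq> b" using abG p unfolding fw2_def by auto
  show "snd p \<noteq> a"
  proof
    assume "snd p = a"
    then have "{a, fst p} \<in> G" using \<open>{fst p, snd p} \<in> G\<close> by (simp add: insert_commute)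
    then show False using p unfolding fw2_def by auto
  qed
qed

lemma sw2_valid:
  assumes G: "G \<in> AA" and p: "p \<in> fw2 G"
  shows "sw2 G p \<in> BB"
proof -
  obtain x y where p_eq: "p = (x,y)" by fastforce
  note F = fw2_facts[OF G p, unfolded p_eq fst_conv snd_conv]
  have GC: "G \<in> CC" using G unfolding AA_def by auto
  have abG: "{a,b} \<in> G" using G unfolding AA_def by auto
  note GP = CC_props[OF GC]
  let ?R = "{{a,b},{x,y}}" and ?Ad = "{{a,x},{b,y}}"
  have sw: "sw2 G p = (G - ?R) \<union> ?Ad" unfolding sw2_def p_eq by simp
  have R: "?R \<subseteq> G" using abG F by auto
  have Ad: "?Ad \<inter> G = {}" using F by auto
  have d1: "{a,b} \<noteq> {x,y}" using F by (auto simp: doubleton_eq_iff)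
  have d2: "{a,x} \<noteq> {b,y}" using F a_ne_b by (auto simp: doubleton_eq_iff)
  have deg: "vdeg ((G - ?R) \<union> ?Ad) z = vdeg G z" for z
  proof (rule vdeg_switch[OF GP(2) R Ad])
    show "finite ?Ad" by simp
    show "card {e \<in> ?R. z \<in> e} = card {e \<in> ?Ad. z \<in> e}"
      using card_filter2[OF d1, of z] card_filter2[OF d2, of z]
        of_bool_pair[OF a_ne_b, of z] of_bool_pair[OF F(3), of z]
        of_bool_pair[of a x z] of_bool_pair[of b y z] F a_ne_b by auto
  qed
  have Adg: "?Ad \<subseteq> all_edges n" using F a_in b_in by (auto simp: pair_in_all_edges)
  have "graph_on n ((G - ?R) \<union> ?Ad)" unfolding graph_on_def using GP(1) Adg by auto
  moreover have "\<forall>i\<in>{1..n}. vdeg ((G - ?R) \<union> ?Ad) i = d i" using deg GP(3) by simp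
  moreover have "K \<subseteq> (G - ?R) \<union> ?Ad" using GP(4) abK F by auto
  moreover have "((G - ?R) \<union> ?Ad) \<inter> H2 = {}" using GP(5) F by auto
  moreover have "{a,b} \<notin> (G - ?R) \<union> ?Ad" using F by (auto simp: doubleton_eq_iff)
  ultimately show ?thesis unfolding sw BB_def CC_def graphs_deg_def by auto
qed

lemma sw2_recover:
  assumes G: "G \<in> AA" and p: "p \<in> fw2 G"
  shows "G = (sw2 G p - {{a, fst p},{b, snd p}}) \<union> {{a,b},{fst p, snd p}}"
proof -
  note F = fw2_facts[OF G p]
  have abG: "{a,b} \<in> G" using G unfolding AA_def by auto
  show ?thesis unfolding sw2_def by (rule recover[symmetric]) (use F abG in auto)
qed

lemma sw2_nb:
  assumes G: "G \<in> AA" and p: "p \<in> fw2 G"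
  shows "fst p \<in> nb (sw2 G p - K) a" "snd p \<in> nb (sw2 G p - K) b"
proof -
  note F = fw2_facts[OF G p]
  have GC: "G \<in> CC" using G unfolding AA_def by auto
  note GP = CC_props[OF GC]
  show "fst p \<in> nb (sw2 G p - K) a" "snd p \<in> nb (sw2 G p - K) b"
    unfolding nb_def sw2_def using F GP(4) by auto
qed

lemma fiber2:
  assumes G': "G' \<in> BB"
  shows "card {q \<in> Sigma AA fw2. sw2 (fst q) (snd q) = G'} \<le> card (nb (G' - K) a) * card (nb (G' - K) b)"
proof -
  have GC': "G' \<in> CC" using G' unfolding BB_def by auto
  let ?Fb = "{q \<in> Sigma AA fw2. sw2 (fst q) (snd q) = G'}"
  have "inj_on snd ?Fb"
  proof (rule inj_onI)
    fix q1 q2 assume q1: "q1 \<in> ?Fb" and q2: "q2 \<in> ?Fb" and e: "snd q1 = snd q2"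
    have "fst q1 = (G' - {{a, fst (snd q1)},{b, snd (snd q1)}}) \<union> {{a,b},{fst (snd q1), snd (snd q1)}}"
    proof -
      have m: "fst q1 \<in> AA" "snd q1 \<in> fw2 (fst q1)" "sw2 (fst q1) (snd q1) = G'"
        using q1 by (auto simp: mem_Sigma_iff)
      show ?thesis using sw2_recover[OF m(1,2)] unfolding m(3) .
    qed
    moreover have "fst q2 = (G' - {{a, fst (snd q2)},{b, snd (snd q2)}}) \<union> {{a,b},{fst (snd q2), snd (snd q2)}}"
    proof -
      have m: "fst q2 \<in> AA" "snd q2 \<in> fw2 (fst q2)" "sw2 (fst q2) (snd q2) = G'"
        using q2 by (auto simp: mem_Sigma_iff)
      show ?thesis using sw2_recover[OF m(1,2)] unfolding m(3) .
    qed
    ultimately have "fst q1 = fst q2" using e by simp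
    then show "q1 = q2" using e by (simp add: prod_eq_iff)
  qed
  moreover have "snd ` ?Fb \<subseteq> nb (G' - K) a \<times> nb (G' - K) b"
    using sw2_nb by fastforce
  moreover have "finite (nb (G' - K) a \<times> nb (G' - K) b)"
    using fin_nb[OF GK_sub[OF GC']] by simp
  ultimately have "card ?Fb \<le> card (nb (G' - K) a \<times> nb (G' - K) b)"
    by (rule card_inj_on_le)
  then show ?thesis by (simp add: card_cartesian_product)
qed

lemma step_a:
  "real (card AA) * (Mp - (2 * real (Jd n d) + 2 * real (dmax n d) + 2 * real (max_deg n H2) * real (dmax n d)))
   \<le> real (card BB) * ((real (d a) - real (vdeg K a)) * (real (d b) - real (vdeg K b)))"
proof -
  let ?s = "2 * real (Jd n d) + 2 * real (dmax n d) + 2 * real (max_deg n H2) * real (dmax n d)"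
  let ?w = "(real (d a) - real (vdeg K a)) * (real (d b) - real (vdeg K b))"
  have fw_fin: "finite (fw2 G)" if "G \<in> AA" for G
    using that fin_OE[OF GK_sub] fw2_sub finite_subset unfolding AA_def by blast
  have "real (card AA) * (Mp - ?s) = (\<Sum>G\<in>AA. (Mp - ?s))" by simp
  also have "\<dots> \<le> (\<Sum>G\<in>AA. real (card (fw2 G)))" by (intro sum_mono) (use fw2_lower in auto)
  also have "\<dots> = real (\<Sum>G\<in>AA. card (fw2 G))" by simp
  also have "(\<Sum>G\<in>AA. card (fw2 G)) = (\<Sum>G'\<in>BB. card {q \<in> Sigma AA fw2. sw2 (fst q) (snd q) = G'})"
    by (rule double_count[OF AA_fin BB_fin fw_fin sw2_valid])
  also have "real \<dots> \<le> (\<Sum>G'\<in>BB. ?w)"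
    unfolding of_nat_sum
  proof (intro sum_mono)
    fix G' assume G': "G' \<in> BB"
    have GC': "G' \<in> CC" using G' unfolding BB_def by auto
    have "vdeg K a \<le> d a" "vdeg K b \<le> d b" using vdeg_le_d[OF GC'] CC_props(4)[OF GC'] by auto
    then have eqw: "real (card (nb (G' - K) a) * card (nb (G' - K) b)) = ?w"
      using card_nbGK[OF GC' a_in] card_nbGK[OF GC' b_in] by (simp add: of_nat_diff)
    have "real (card {q \<in> Sigma AA fw2. sw2 (fst q) (snd q) = G'}) \<le> real (card (nb (G' - K) a) * card (nb (G' - K) b))"
      using fiber2[OF G'] by (rule of_nat_mono)
    then show "real (card {q \<in> Sigma AA fw2. sw2 (fst q) (snd q) = G'}) \<le> ?w"
      unfolding eqw .
  qed
  also have "\<dots> = real (card BB) * ?w" by simp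
  finally show ?thesis .
qed

end


context swsetup begin

definition "badfree G x y = {p \<in> OE (G - K). fst p \<noteq> x \<and> fst p \<notin> nb G x \<and> snd p \<noteq> y \<and> snd p \<notin> nb G y
   \<and> fst p \<notin> nb H2 x \<and> snd p \<notin> nb H2 y}"

lemma badfree_lower:
  assumes GC: "G \<in> CC"
  shows "real (card (badfree G x y)) \<ge> Mp - (2 * real (Jd n d) + 2 * real (dmax n d) + 2 * real (max_deg n H2) * real (dmax n d))"
proof -
  let ?Ob = "OE (G - K)"
  have FG: "G - K \<subseteq> G" by auto
  have fin: "finite ?Ob" using fin_OE[OF GK_sub[OF GC]] .
  let ?B1 = "{p \<in> ?Ob. fst p \<in> {x}}"
  let ?B2 = "{p \<in> ?Ob. fst p \<in> nb G x}"
  let ?B3 = "{p \<in> ?Ob. snd p \<in> {y}}"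
  let ?B4 = "{p \<in> ?Ob. snd p \<in> nb G y}"
  let ?B5 = "{p \<in> ?Ob. fst p \<in> nb H2 x}"
  let ?B6 = "{p \<in> ?Ob. snd p \<in> nb H2 y}"
  have sub: "?Ob - (?B1 \<union> ?B2 \<union> ?B3 \<union> ?B4 \<union> ?B5 \<union> ?B6) \<subseteq> badfree G x y"
    unfolding badfree_def by auto
  have bs: "badfree G x y \<subseteq> ?Ob" unfolding badfree_def by auto
  have "real (card (?Ob - (?B1 \<union> ?B2 \<union> ?B3 \<union> ?B4 \<union> ?B5 \<union> ?B6))) \<le> real (card (badfree G x y))"
    using card_mono[OF finite_subset[OF bs fin] sub] by simp
  moreover have "real (card ?Ob) - real (card ?B1) - real (card ?B2) - real (card ?B3) - real (card ?B4) - real (card ?B5) - real (card ?B6)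
     \<le> real (card (?Ob - (?B1 \<union> ?B2 \<union> ?B3 \<union> ?B4 \<union> ?B5 \<union> ?B6)))"
    by (rule card_diff_bads[OF fin]) auto
  moreover have "real (card ?Ob) = Mp" using card_OE_GK[OF GC] .
  moreover have "real (card ?B1) \<le> real (dmax n d)" using bad_single_fst[OF GC FG] by simp
  moreover have "real (card ?B3) \<le> real (dmax n d)" using bad_single_snd[OF GC FG] by simp
  moreover have "real (card ?B2) \<le> real (Jd n d)" using bad_nb_fst[OF GC FG] by simp
  moreover have "real (card ?B4) \<le> real (Jd n d)" using bad_nb_snd[OF GC FG] by simp
  moreover have "real (card ?B5) \<le> real (max_deg n H2) * real (dmax n d)"
    using bad_nbH_fst[OF GC FG] by (metis of_nat_le_iff of_nat_mult)
  moreover have "real (card ?B6) \<le> real (max_deg n H2) * real (dmax n d)"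
    using bad_nbH_snd[OF GC FG] by (metis of_nat_le_iff of_nat_mult)
  ultimately show ?thesis by linarith
qed

definition "fw3 G = Sigma (nb (G - K) a \<times> nb (G - K) b) (\<lambda>xy. badfree G (fst xy) (snd xy))"
definition "sw3 G q = (G - {{a, fst (fst q)}, {b, snd (fst q)}, {fst (snd q), snd (snd q)}})
   \<union> {{a,b}, {fst (fst q), fst (snd q)}, {snd (fst q), snd (snd q)}}"

lemma fw3_facts:
  assumes G: "G \<in> BB" and q: "q \<in> fw3 G" and qe: "q = ((x,y),(u,v))"
  shows "{a,x} \<in> G" "{a,x} \<notin> K" "{b,y} \<in> G" "{b,y} \<notin> K" "{u,v} \<in> G" "{u,v} \<notin> K"
    "a \<noteq> x" "b \<noteq> y" "u \<noteq> v" "x \<in> {1..n}" "y \<in> {1..n}" "u \<in> {1..n}" "v \<in> {1..n}"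
    "u \<noteq> x" "{x,u} \<notin> G" "v \<noteq> y" "{y,v} \<notin> G" "{x,u} \<notin> H2" "{y,v} \<notin> H2"
    "x \<noteq> b" "y \<noteq> a"
proof -
  have GC: "G \<in> CC" using G unfolding BB_def by auto
  have abG: "{a,b} \<notin> G" using G unfolding BB_def by auto
  have gs: "G \<subseteq> all_edges n" using CC_props(1)[OF GC] .
  have m: "x \<in> nb (G - K) a" "y \<in> nb (G - K) b" "(u,v) \<in> badfree G x y"
    using q unfolding qe fw3_def by auto
  then show ax: "{a,x} \<in> G" "{a,x} \<notin> K" "{b,y} \<in> G" "{b,y} \<notin> K" unfolding nb_def by auto
  have uv: "(u,v) \<in> OE (G - K)" using m(3) unfolding badfree_def by auto
  then show "{u,v} \<in> G" "{u,v} \<notin> K" unfolding OE_def by auto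
  show "u \<noteq> v" "u \<in> {1..n}" "v \<in> {1..n}" using OE_mem[OF GK_sub[OF GC] uv] by auto
  show "a \<noteq> x" "x \<in> {1..n}" using ax gs pair_in_all_edges by blast+
  show "b \<noteq> y" "y \<in> {1..n}" using ax gs pair_in_all_edges by blast+
  show "u \<noteq> x" "{x,u} \<notin> G" "v \<noteq> y" "{y,v} \<notin> G" "{x,u} \<notin> H2" "{y,v} \<notin> H2"
    using m(3) unfolding badfree_def nb_def by auto
  show "x \<noteq> b" using ax abG by auto
  show "y \<noteq> a" using ax abG by (auto simp: insert_commute)
qed

lemma sw3_valid:
  assumes G: "G \<in> BB" and q: "q \<in> fw3 G"
  shows "sw3 G q \<in> AA"
proof -
  obtain x y u v where qe: "q = ((x,y),(u,v))" by (metis prod.exhaust)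
  note F = fw3_facts[OF G q qe]
  have GC: "G \<in> CC" using G unfolding BB_def by auto
  have abG: "{a,b} \<notin> G" using G unfolding BB_def by auto
  note GP = CC_props[OF GC]
  let ?R = "{{a,x},{b,y},{u,v}}" and ?Ad = "{{a,b},{x,u},{y,v}}"
  have sw: "sw3 G q = (G - ?R) \<union> ?Ad" unfolding sw3_def qe by simp
  have R: "?R \<subseteq> G" using F by auto
  have Ad: "?Ad \<inter> G = {}" using F abG by auto
  have r1: "{a,x} \<noteq> {b,y}" using F a_ne_b by (auto simp: doubleton_eq_iff)
  have r2: "{a,x} \<noteq> {u,v}"
  proof
    assume e: "{a,x} = {u,v}"
    then have "(a = u \<and> x = v) \<or> (a = v \<and> x = u)" by (auto simp: doubleton_eq_iff)
    then show False using F by (auto simp: insert_commute)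
  qed
  have r3: "{b,y} \<noteq> {u,v}"
  proof
    assume e: "{b,y} = {u,v}"
    then have "(b = u \<and> y = v) \<or> (b = v \<and> y = u)" by (auto simp: doubleton_eq_iff)
    then show False using F by (auto simp: insert_commute)
  qed
  have a1: "{a,b} \<noteq> {x,u}" using F by (auto simp: doubleton_eq_iff)
  have a2: "{a,b} \<noteq> {y,v}" using F by (auto simp: doubleton_eq_iff)
  have a3: "{x,u} \<noteq> {y,v}"
  proof
    assume e: "{x,u} = {y,v}"
    then have "(x = y \<and> u = v) \<or> (x = v \<and> u = y)" by (auto simp: doubleton_eq_iff)
    then show False using F by (auto simp: insert_commute)
  qed
  have deg: "vdeg ((G - ?R) \<union> ?Ad) z = vdeg G z" for z
  proof (rule vdeg_switch[OF GP(2) R Ad])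
    show "finite ?Ad" by simp
    show "card {e \<in> ?R. z \<in> e} = card {e \<in> ?Ad. z \<in> e}"
      using card_filter3[OF r1 r2 r3, of z] card_filter3[OF a1 a2 a3, of z]
        of_bool_pair[OF a_ne_b, of z] of_bool_pair[of a x z] of_bool_pair[of b y z]
        of_bool_pair[of u v z] of_bool_pair[of x u z] of_bool_pair[of y v z] F a_ne_b by auto
  qed
  have Adg: "?Ad \<subseteq> all_edges n" using F a_in b_in a_ne_b ab by (auto simp: pair_in_all_edges)
  have "graph_on n ((G - ?R) \<union> ?Ad)" unfolding graph_on_def using GP(1) Adg by auto
  moreover have "\<forall>i\<in>{1..n}. vdeg ((G - ?R) \<union> ?Ad) i = d i" using deg GP(3) by simp
  moreover have "K \<subseteq> (G - ?R) \<union> ?Ad" using GP(4) F by auto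
  moreover have "((G - ?R) \<union> ?Ad) \<inter> H2 = {}" using GP(5) F abH by auto
  moreover have "{a,b} \<in> (G - ?R) \<union> ?Ad" by simp
  ultimately show ?thesis unfolding sw AA_def CC_def graphs_deg_def by auto
qed

lemma sw3_recover:
  assumes G: "G \<in> BB" and q: "q \<in> fw3 G" and qe: "q = ((x,y),(u,v))"
  shows "G = (sw3 G q - {{a,b},{x,u},{y,v}}) \<union> {{a,x},{b,y},{u,v}}"
proof -
  note F = fw3_facts[OF G q qe]
  have abG: "{a,b} \<notin> G" using G unfolding BB_def by auto
  show ?thesis unfolding sw3_def qe fst_conv snd_conv by (rule recover[symmetric]) (use F abG in auto)
qed

lemma sw3_OE:
  assumes G: "G \<in> BB" and q: "q \<in> fw3 G" and qe: "q = ((x,y),(u,v))"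
  shows "(x,u) \<in> OE (sw3 G q - K)" "(y,v) \<in> OE (sw3 G q - K)"
proof -
  note F = fw3_facts[OF G q qe]
  have GC: "G \<in> CC" using G unfolding BB_def by auto
  note GP = CC_props[OF GC]
  have "{x,u} \<notin> K" "{y,v} \<notin> K" using F GP(4) by auto
  then show "(x,u) \<in> OE (sw3 G q - K)" "(y,v) \<in> OE (sw3 G q - K)"
    unfolding OE_def sw3_def qe by auto
qed

definition "enc3 q = ((fst (fst (snd q)), fst (snd (snd q))), (snd (fst (snd q)), snd (snd (snd q))))"

lemma fiber3:
  assumes G': "G' \<in> AA"
  shows "card {q \<in> Sigma BB fw3. sw3 (fst q) (snd q) = G'} \<le> card (OE (G' - K)) * card (OE (G' - K))"
proof -
  have GC': "G' \<in> CC" using G' unfolding AA_def by auto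
  let ?Fb = "{q \<in> Sigma BB fw3. sw3 (fst q) (snd q) = G'}"
  have rec: "fst q = (G' - {{a,b},{fst (fst (enc3 q)), snd (fst (enc3 q))},{fst (snd (enc3 q)), snd (snd (enc3 q))}})
      \<union> {{a, fst (fst (snd q))},{b, snd (fst (snd q))},{fst (snd (snd q)), snd (snd (snd q))}}" if qF: "q \<in> ?Fb" for q
  proof -
    have m: "fst q \<in> BB" "snd q \<in> fw3 (fst q)" "sw3 (fst q) (snd q) = G'"
      using qF by (auto simp: mem_Sigma_iff)
    obtain x y u v where qe: "snd q = ((x,y),(u,v))" by (metis prod.exhaust)
    show ?thesis using sw3_recover[OF m(1,2) qe] m(3) qe unfolding enc3_def by simp
  qed
  have "inj_on enc3 ?Fb"
  proof (rule inj_onI)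
    fix q1 q2 assume q1: "q1 \<in> ?Fb" and q2: "q2 \<in> ?Fb" and e: "enc3 q1 = enc3 q2"
    have s: "snd q1 = snd q2" using e unfolding enc3_def by (simp add: prod_eq_iff)
    have "fst q1 = fst q2" using rec[OF q1] rec[OF q2] e s by simp
    then show "q1 = q2" using s by (simp add: prod_eq_iff)
  qed
  moreover have "enc3 ` ?Fb \<subseteq> OE (G' - K) \<times> OE (G' - K)"
  proof
    fix r assume "r \<in> enc3 ` ?Fb"
    then obtain q where qF: "q \<in> ?Fb" and r: "r = enc3 q" by blast
    have m: "fst q \<in> BB" "snd q \<in> fw3 (fst q)" "sw3 (fst q) (snd q) = G'"
      using qF by (auto simp: mem_Sigma_iff)
    obtain x y u v where qe: "snd q = ((x,y),(u,v))" by (metis prod.exhaust)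
    show "r \<in> OE (G' - K) \<times> OE (G' - K)"
      using sw3_OE[OF m(1,2) qe] m(3) qe unfolding r enc3_def by simp
  qed
  moreover have "finite (OE (G' - K) \<times> OE (G' - K))"
    using fin_OE[OF GK_sub[OF GC']] by simp
  ultimately have "card ?Fb \<le> card (OE (G' - K) \<times> OE (G' - K))"
    by (rule card_inj_on_le)
  then show ?thesis by (simp add: card_cartesian_product)
qed

lemma step_b:
  "real (card BB) * (((real (d a) - real (vdeg K a)) * (real (d b) - real (vdeg K b))) *
     (Mp - (2 * real (Jd n d) + 2 * real (dmax n d) + 2 * real (max_deg n H2) * real (dmax n d))))
   \<le> real (card AA) * (Mp * Mp)"
proof -
  let ?s = "2 * real (Jd n d) + 2 * real (dmax n d) + 2 * real (max_deg n H2) * real (dmax n d)"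
  let ?w = "(real (d a) - real (vdeg K a)) * (real (d b) - real (vdeg K b))"
  have fw_fin: "finite (fw3 G)" if "G \<in> BB" for G
  proof -
    have GC: "G \<in> CC" using that unfolding BB_def by auto
    have "fw3 G \<subseteq> (nb (G - K) a \<times> nb (G - K) b) \<times> OE (G - K)" unfolding fw3_def badfree_def by auto
    moreover have "finite ((nb (G - K) a \<times> nb (G - K) b) \<times> OE (G - K))"
      using fin_nb[OF GK_sub[OF GC]] fin_OE[OF GK_sub[OF GC]] by simp
    ultimately show ?thesis using finite_subset by blast
  qed
  have lowG: "?w * (Mp - ?s) \<le> real (card (fw3 G))" if G: "G \<in> BB" for G
  proof -
    have GC: "G \<in> CC" using G unfolding BB_def by auto
    have "vdeg K a \<le> d a" "vdeg K b \<le> d b" using vdeg_le_d[OF GC] CC_props(4)[OF GC] by auto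
    then have eqw: "real (card (nb (G - K) a \<times> nb (G - K) b)) = ?w"
      using card_nbGK[OF GC a_in] card_nbGK[OF GC b_in] by (simp add: of_nat_diff card_cartesian_product)
    have fN: "finite (nb (G - K) a \<times> nb (G - K) b)" using fin_nb[OF GK_sub[OF GC]] by simp
    have "?w * (Mp - ?s) = (\<Sum>xy\<in>nb (G - K) a \<times> nb (G - K) b. (Mp - ?s))" using eqw by simp
    also have "\<dots> \<le> (\<Sum>xy\<in>nb (G - K) a \<times> nb (G - K) b. real (card (badfree G (fst xy) (snd xy))))"
      by (intro sum_mono badfree_lower[OF GC])
    also have "\<dots> = real (card (fw3 G))"
    proof -
      have "card (fw3 G) = (\<Sum>xy\<in>nb (G - K) a \<times> nb (G - K) b. card (badfree G (fst xy) (snd xy)))"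
        unfolding fw3_def
      proof (rule card_SigmaI[OF fN])
        show "\<forall>xy\<in>nb (G - K) a \<times> nb (G - K) b. finite (badfree G (fst xy) (snd xy))"
          using fin_OE[OF GK_sub[OF GC]] unfolding badfree_def by auto
      qed
      then show ?thesis by simp
    qed
    finally show ?thesis .
  qed
  have "real (card BB) * (?w * (Mp - ?s)) = (\<Sum>G\<in>BB. ?w * (Mp - ?s))" by simp
  also have "\<dots> \<le> (\<Sum>G\<in>BB. real (card (fw3 G)))" by (intro sum_mono lowG)
  also have "\<dots> = real (\<Sum>G\<in>BB. card (fw3 G))" by simp
  also have "(\<Sum>G\<in>BB. card (fw3 G)) = (\<Sum>G'\<in>AA. card {q \<in> Sigma BB fw3. sw3 (fst q) (snd q) = G'})"
    by (rule double_count[OF BB_fin AA_fin fw_fin sw3_valid])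
  also have "real \<dots> \<le> (\<Sum>G'\<in>AA. Mp * Mp)"
    unfolding of_nat_sum
  proof (intro sum_mono)
    fix G' assume G': "G' \<in> AA"
    have GC': "G' \<in> CC" using G' unfolding AA_def by auto
    have "real (card {q \<in> Sigma BB fw3. sw3 (fst q) (snd q) = G'}) \<le> real (card (OE (G' - K)) * card (OE (G' - K)))"
      using fiber3[OF G'] by (rule of_nat_mono)
    also have "\<dots> = Mp * Mp" using card_OE_GK[OF GC'] by simp
    finally show "real (card {q \<in> Sigma BB fw3. sw3 (fst q) (snd q) = G'}) \<le> Mp * Mp" .
  qed
  also have "\<dots> = real (card AA) * (Mp * Mp)" by simp
  finally show ?thesis .
qed

end


lemma ffall_nonneg: "ffall x k \<ge> 0"
proof (cases "k \<le> x")
  case True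
  then show ?thesis unfolding ffall_def by (intro prod_nonneg) auto
next
  case False
  then have "x \<in> {..<k}" by simp
  then show ?thesis unfolding ffall_def by (simp add: prod_zero)
qed

lemma ffall_Suc: "ffall x (Suc k) = ffall x k * (real x - real k)"
  unfolding ffall_def by simp

context swsetup begin

lemma wnonneg: assumes "CC \<noteq> {}" shows "real (d a) - real (vdeg K a) \<ge> 0" "real (d b) - real (vdeg K b) \<ge> 0"
proof -
  obtain G where GC: "G \<in> CC" using assms by blast
  show "real (d a) - real (vdeg K a) \<ge> 0" "real (d b) - real (vdeg K b) \<ge> 0"
    using vdeg_le_d[OF GC CC_props(4)[OF GC]] by (auto simp: of_nat_le_iff)
qed

lemma AA_sub: "AA \<subseteq> CC" unfolding AA_def by auto

lemma step_a_final:
  fixes R :: real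
  defines "s \<equiv> 2 * real (Jd n d) + 2 * real (dmax n d) + 2 * real (max_deg n H2) * real (dmax n d)"
  assumes pos: "Mp - s > 0" and sR: "s \<le> R * (Mp - s)" and R0: "0 \<le> R"
  shows "real (card AA) \<le> real (card CC) * ((real (d a) - real (vdeg K a)) * (real (d b) - real (vdeg K b)) * (1 + R) / Mp)"
proof (cases "CC = {}")
  case True
  then have "AA = {}" using AA_sub by blast
  then show ?thesis using True by simp
next
  case False
  let ?w = "(real (d a) - real (vdeg K a)) * (real (d b) - real (vdeg K b))"
  have w0: "?w \<ge> 0" using wnonneg[OF False] by simp
  define A where "A = real (card AA)"
  define B where "B = real (card BB)"
  have A0: "A \<ge> 0" "B \<ge> 0" unfolding A_def B_def by auto
  have st: "A * (Mp - s) \<le> B * ?w" using step_a unfolding A_def B_def s_def .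
  have s0: "s \<ge> 0" unfolding s_def by simp
  have Mp0: "Mp > 0" using pos s0 by linarith
  have "A * (Mp - s) * s \<le> B * ?w * s" using st s0 by (rule mult_right_mono)
  also have "\<dots> \<le> B * ?w * (R * (Mp - s))" using sR A0 w0 by (intro mult_left_mono) auto
  finally have "(A * s) * (Mp - s) \<le> (B * ?w * R) * (Mp - s)" by (simp add: algebra_simps)
  then have As: "A * s \<le> B * ?w * R" using pos by simp
  have "A * Mp = A * (Mp - s) + A * s" by (simp add: algebra_simps)
  also have "\<dots> \<le> B * ?w + B * ?w * R" using st As by linarith
  also have "\<dots> \<le> (A + B) * ?w * (1 + R)"
  proof -
    have e: "(A + B) * ?w * (1 + R) = A * ?w * (1 + R) + (B * ?w + B * ?w * R)" by (simp add: algebra_simps)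
    have "A * ?w * (1 + R) \<ge> 0" using A0 w0 R0 by simp
    then show ?thesis unfolding e by linarith
  qed
  finally have "A * Mp \<le> (A + B) * ?w * (1 + R)" .
  then have "A \<le> (A + B) * ?w * (1 + R) / Mp" using Mp0 by (simp add: field_simps)
  moreover have "real (card CC) = A + B" unfolding A_def B_def using CC_split by simp
  ultimately show ?thesis unfolding A_def by (simp add: algebra_simps)
qed

lemma step_b_final:
  fixes r Dp :: real
  defines "s \<equiv> 2 * real (Jd n d) + 2 * real (dmax n d) + 2 * real (max_deg n H2) * real (dmax n d)"
  assumes Mp0: "Mp > 0" and Da: "real (d a) \<le> Dp" and Db: "real (d b) \<le> Dp"
    and sr: "s + Dp ^ 2 \<le> r * Mp" and r1: "r \<le> 1"
  shows "real (card AA) \<ge> real (card CC) * ((real (d a) - real (vdeg K a)) * (real (d b) - real (vdeg K b)) * (1 - r) / Mp)"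
proof (cases "CC = {}")
  case True
  then show ?thesis by simp
next
  case False
  define wa where "wa = real (d a) - real (vdeg K a)"
  define wb where "wb = real (d b) - real (vdeg K b)"
  define w where "w = wa * wb"
  have wa0: "wa \<ge> 0" "wb \<ge> 0" using wnonneg[OF False] unfolding wa_def wb_def by auto
  have "wa \<le> Dp" "wb \<le> Dp" using Da Db unfolding wa_def wb_def by auto
  then have wD: "w \<le> Dp ^ 2" unfolding w_def power2_eq_square using wa0 by (intro mult_mono) auto
  have w0: "w \<ge> 0" unfolding w_def using wa0 by simp
  define A where "A = real (card AA)"
  define B where "B = real (card BB)"
  have A0: "A \<ge> 0" "B \<ge> 0" unfolding A_def B_def by auto
  have st: "B * (w * (Mp - s)) \<le> A * (Mp * Mp)" using step_b unfolding A_def B_def s_def w_def wa_def wb_def .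
  have s0: "s \<ge> 0" unfolding s_def by simp
  define t where "t = s / Mp"
  define u where "u = w / Mp"
  have t0: "t \<ge> 0" "u \<ge> 0" unfolding t_def u_def using s0 w0 Mp0 by auto
  have tu: "t + u \<le> r"
  proof -
    have "s + w \<le> r * Mp" using sr wD by linarith
    then have "(s + w) / Mp \<le> r" using Mp0 by (simp add: field_simps)
    then show ?thesis unfolding t_def u_def by (simp add: add_divide_distrib)
  qed
  have st2: "B * u * (1 - t) \<le> A"
  proof -
    have "B * u * (1 - t) * (Mp * Mp) = B * (w * (Mp - s))"
      unfolding t_def u_def using Mp0 by (simp add: field_simps)
    then have "B * u * (1 - t) * (Mp * Mp) \<le> A * (Mp * Mp)" using st by (simp only:)
    then show ?thesis using Mp0 by simp
  qed
  have r0: "1 - r \<ge> 0" using r1 by simp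
  have q0: "1 - u * (1 - r) \<ge> 0"
  proof -
    have "u * (1 - r) \<le> u * 1" using t0 r0 tu by (intro mult_left_mono) auto
    then show ?thesis using tu t0 r1 by linarith
  qed
  have key: "(1 - t) * (1 - u * (1 - r)) \<ge> 1 - r"
  proof -
    have "(1 - t) * (1 - u * (1 - r)) = 1 - t - u * (1 - r) + t * u * (1 - r)" by (simp add: algebra_simps)
    moreover have "t * u * (1 - r) \<ge> 0" using t0 r0 by simp
    moreover have "u * (1 - r) \<le> u" using t0 r0 tu by (simp add: algebra_simps)
    ultimately show ?thesis using tu by linarith
  qed
  have "B * u * (1 - r) \<le> B * u * ((1 - t) * (1 - u * (1 - r)))"
    using key A0 t0 by (intro mult_left_mono) auto
  also have "\<dots> = (B * u * (1 - t)) * (1 - u * (1 - r))" by (simp add: algebra_simps)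
  also have "\<dots> \<le> A * (1 - u * (1 - r))" using st2 q0 by (rule mult_right_mono)
  finally have fin: "(A + B) * (u * (1 - r)) \<le> A" by (simp add: algebra_simps)
  have CCe: "real (card CC) = A + B" unfolding A_def B_def using CC_split by simp
  have ue: "u * (1 - r) = w * (1 - r) / Mp" unfolding u_def by simp
  have "real (card CC) * (w * (1 - r) / Mp) = (A + B) * (u * (1 - r))" unfolding CCe ue ..
  then have "real (card CC) * (w * (1 - r) / Mp) \<le> A" using fin by linarith
  then show ?thesis unfolding A_def w_def wa_def wb_def .
qed

end


lemma vdeg_insert: assumes "finite K" "e \<notin> K"
  shows "vdeg (insert e K) i = vdeg K i + of_bool (i \<in> e)"
proof (cases "i \<in> e")
  case True
  then have "{x \<in> insert e K. i \<in> x} = insert e {x \<in> K. i \<in> x}" by auto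
  then show ?thesis unfolding vdeg_def using assms True by simp
next
  case False
  then have "{x \<in> insert e K. i \<in> x} = {x \<in> K. i \<in> x}" by auto
  then show ?thesis unfolding vdeg_def using False by simp
qed

lemma fK_insert:
  assumes "a \<noteq> b" "a \<in> {1..n}" "b \<in> {1..n}" "finite K" "{a,b} \<notin> K"
  shows "(\<Prod>i\<in>{1..n}. ffall (d i) (vdeg (insert {a,b} K) i)) =
    (\<Prod>i\<in>{1..n}. ffall (d i) (vdeg K i)) * ((real (d a) - real (vdeg K a)) * (real (d b) - real (vdeg K b)))"
proof -
  let ?g = "\<lambda>i. real (d i) - real (vdeg K i)"
  have "(\<Prod>i\<in>{1..n}. ffall (d i) (vdeg (insert {a,b} K) i)) =
        (\<Prod>i\<in>{1..n}. ffall (d i) (vdeg K i) * (if i \<in> {a,b} then ?g i else 1))"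
  proof (rule prod.cong)
    fix i assume "i \<in> {1..n}"
    show "ffall (d i) (vdeg (insert {a,b} K) i) = ffall (d i) (vdeg K i) * (if i \<in> {a,b} then ?g i else 1)"
    proof (cases "i \<in> {a,b}")
      case True
      have v: "vdeg (insert {a,b} K) i = Suc (vdeg K i)" using vdeg_insert[OF assms(4,5), of i] unfolding of_bool_def if_P[OF True] by simp
      show ?thesis unfolding v ffall_Suc if_P[OF True] ..
    next
      case False
      have v: "vdeg (insert {a,b} K) i = vdeg K i" using vdeg_insert[OF assms(4,5), of i] unfolding of_bool_def if_not_P[OF False] by simp
      show ?thesis unfolding v if_not_P[OF False] by simp
    qed
  qed simp
  also have "\<dots> = (\<Prod>i\<in>{1..n}. ffall (d i) (vdeg K i)) * (\<Prod>i\<in>{1..n}. if i \<in> {a,b} then ?g i else 1)"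
    by (rule prod.distrib)
  also have "(\<Prod>i\<in>{1..n}. if i \<in> {a,b} then ?g i else 1) = (\<Prod>i\<in>{i \<in> {1..n}. i \<in> {a,b}}. ?g i)"
    by (rule prod.inter_filter[symmetric]) simp
  also have "{i \<in> {1..n}. i \<in> {a,b}} = {a,b}" using assms by auto
  also have "(\<Prod>i\<in>{a,b}. ?g i) = ?g a * ?g b" using assms(1) by simp
  finally show ?thesis .
qed

lemma g_insert:
  fixes c M :: real
  shows "(\<Prod>j\<in>{1..Suc k}. c / (M - 2 * real j + 2)) = (\<Prod>j\<in>{1..k}. c / (M - 2 * real j + 2)) * (c / (M - 2 * real k))"
  by (simp add: algebra_simps)

lemma g_nonneg:
  fixes c M :: real
  assumes "c \<ge> 0" "M - 2 * real k > 0"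
  shows "(\<Prod>j\<in>{1..Suc k}. c / (M - 2 * real j + 2)) \<ge> 0"
proof (intro prod_nonneg)
  fix j assume "j \<in> {1..Suc k}"
  then have "M - 2 * real j + 2 > 0" using assms(2) by auto
  then show "c / (M - 2 * real j + 2) \<ge> 0" using assms(1) by simp
qed

lemma fK_nonneg: "(\<Prod>i\<in>{1..n}. ffall (d i) (vdeg K i)) \<ge> 0"
  by (intro prod_nonneg ffall_nonneg)

lemma edge_pair: "e \<in> all_edges n \<Longrightarrow> \<exists>a b. e = {a,b} \<and> a \<noteq> b \<and> a \<in> {1..n} \<and> b \<in> {1..n}"
  using edge_mem by blast

lemma ind_a:
  fixes R :: real
  assumes H1g: "graph_on n H1" and H2g: "graph_on n H2" and dis: "H1 \<inter> H2 = {}"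
    and D0: "real (dsum n d) - 2 * real (card H1) > 0"
    and R0: "0 \<le> R" and R1: "R \<le> 1"
    and sR: "2 * (2 * real (Jd n d) + 2 * real (dmax n d) + 2 * real (max_deg n H2) * real (dmax n d))
              \<le> R * (real (dsum n d) - 2 * real (card H1))"
    and KH: "K \<subseteq> H1"
  shows "real (card {G \<in> graphs_deg n d. K \<subseteq> G \<and> G \<inter> H2 = {}}) \<le>
     real (card {G \<in> graphs_deg n d. {} \<subseteq> G \<and> G \<inter> H2 = {}}) * (\<Prod>i\<in>{1..n}. ffall (d i) (vdeg K i))
     * (\<Prod>j\<in>{1..card K}. (1 + R) / (real (dsum n d) - 2 * real j + 2))"
proof -
  have fH1: "finite H1" using H1g fin_graph unfolding graph_on_def by blast
  have fK: "finite K" using KH fH1 finite_subset by blast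
  define M where "M = real (dsum n d)"
  define D where "D = M - 2 * real (card H1)"
  define s where "s = 2 * real (Jd n d) + 2 * real (dmax n d) + 2 * real (max_deg n H2) * real (dmax n d)"
  define c0 where "c0 = real (card {G \<in> graphs_deg n d. {} \<subseteq> G \<and> G \<inter> H2 = {}})"
  have D0': "D > 0" using D0 unfolding D_def M_def .
  have s0: "s \<ge> 0" unfolding s_def by simp
  have sD: "2 * s \<le> D"
  proof -
    have sR': "2 * s \<le> R * D" using sR unfolding s_def D_def M_def .
    have "R * D \<le> D" using mult_right_mono[OF R1, of D] D0' by simp
    then show ?thesis using sR' by linarith
  qed
  show ?thesis using fK KH unfolding M_def[symmetric]
  proof (induction K rule: finite_subset_induct')
    case empty
    then show ?case by (simp add: vdeg_def ffall_def)
  next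
    case (insert e K)
    have eH1: "e \<in> all_edges n" using insert.hyps(2) H1g unfolding graph_on_def by blast
    obtain a b where e: "e = {a,b}" "a \<noteq> b" "a \<in> {1..n}" "b \<in> {1..n}" using edge_pair[OF eH1] by blast
    interpret S: swsetup n d H2 K a b
    proof
      show "H2 \<subseteq> all_edges n" using H2g unfolding graph_on_def .
      show "K \<subseteq> all_edges n" using insert.hyps(3) H1g unfolding graph_on_def by blast
      show "K \<inter> H2 = {}" using insert.hyps(3) dis by blast
      show "{a,b} \<in> all_edges n" using eH1 e by simp
      show "{a,b} \<notin> K" using insert.hyps(4) e by simp
      show "{a,b} \<notin> H2" using insert.hyps(2) dis e by blast
    qed
    have CCe: "S.CC = {G \<in> graphs_deg n d. K \<subseteq> G \<and> G \<inter> H2 = {}}" unfolding S.CC_def ..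
    have AAe: "S.AA = {G \<in> graphs_deg n d. insert e K \<subseteq> G \<and> G \<inter> H2 = {}}" unfolding S.AA_def S.CC_def e by auto
    have cK: "card (insert e K) = Suc (card K)" using insert.hyps(1,4) by simp
    have cKh: "Suc (card K) \<le> card H1" using card_mono[OF fH1 insert_subset[THEN iffD2, OF conjI[OF insert.hyps(2,3)]]] cK by simp
    have MpD: "S.Mp \<ge> D + 2" unfolding S.Mp_def D_def M_def using cKh by simp
    have Mps: "S.Mp - s > 0" using MpD sD s0 D0' by linarith
    have sR': "s \<le> R * (S.Mp - s)"
    proof -
      have "S.Mp - s \<ge> D / 2" using MpD sD by linarith
      then have "R * (S.Mp - s) \<ge> R * (D / 2)" using R0 by (rule mult_left_mono)
      moreover have "R * (D / 2) \<ge> s" using sR unfolding s_def[symmetric] D_def M_def by simp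
      ultimately show ?thesis by linarith
    qed
    have step: "real (card S.AA) \<le> real (card S.CC) * ((real (d a) - real (vdeg K a)) * (real (d b) - real (vdeg K b)) * (1 + R) / S.Mp)"
      using S.step_a_final[OF Mps[unfolded s_def] sR'[unfolded s_def] R0] .
    define w where "w = (real (d a) - real (vdeg K a)) * (real (d b) - real (vdeg K b))"
    define fk where "fk = (\<Prod>i\<in>{1..n}. ffall (d i) (vdeg K i))"
    define gk where "gk = (\<Prod>j\<in>{1..card K}. (1 + R) / (M - 2 * real j + 2))"
    have Mpe: "S.Mp = M - 2 * real (card K)" unfolding S.Mp_def M_def ..
    have rhs: "c0 * (\<Prod>i\<in>{1..n}. ffall (d i) (vdeg (insert e K) i)) * (\<Prod>j\<in>{1..card (insert e K)}. (1 + R) / (M - 2 * real j + 2))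
        = c0 * (fk * w) * (gk * ((1 + R) / S.Mp))"
      unfolding cK unfolding e(1) fK_insert[OF e(2,3,4) insert.hyps(1) insert.hyps(4)[unfolded e]] g_insert fk_def gk_def w_def Mpe ..
    have rhs0: "c0 * (\<Prod>i\<in>{1..n}. ffall (d i) (vdeg (insert e K) i)) * (\<Prod>j\<in>{1..card (insert e K)}. (1 + R) / (M - 2 * real j + 2)) \<ge> 0"
    proof -
      have "M - 2 * real (card K) > 0" using MpD D0' Mpe by linarith
      then have "(\<Prod>j\<in>{1..card (insert e K)}. (1 + R) / (M - 2 * real j + 2)) \<ge> 0"
        unfolding cK using R0 by (intro g_nonneg) auto
      then show ?thesis unfolding c0_def using fK_nonneg by simp
    qed
    show ?case
    proof (cases "S.CC = {}")
      case True
      then have "S.AA = {}" using S.AA_sub by blast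
      then have "card {G \<in> graphs_deg n d. insert e K \<subseteq> G \<and> G \<inter> H2 = {}} = 0" unfolding AAe by (metis card.empty)
      then show ?thesis using rhs0 unfolding c0_def by simp
    next
      case False
      have w0: "w \<ge> 0" using S.wnonneg[OF False] unfolding w_def by simp
      have Mp0: "S.Mp > 0" using Mps s0 by linarith
      have q0: "w * (1 + R) / S.Mp \<ge> 0" using w0 R0 Mp0 by simp
      have IH: "real (card S.CC) \<le> c0 * fk * gk" using insert.IH unfolding CCe c0_def fk_def gk_def .
      have "real (card S.AA) \<le> real (card S.CC) * (w * (1 + R) / S.Mp)" using step unfolding w_def .
      also have "\<dots> \<le> (c0 * fk * gk) * (w * (1 + R) / S.Mp)" using IH q0 by (rule mult_right_mono)
      also have "\<dots> = c0 * (fk * w) * (gk * ((1 + R) / S.Mp))" by (simp add: algebra_simps)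
      finally have fin: "real (card S.AA) \<le> c0 * (fk * w) * (gk * ((1 + R) / S.Mp))" .
      show ?thesis unfolding c0_def[symmetric] AAe[symmetric] rhs by (rule fin)
    qed
  qed
qed

lemma ind_b:
  fixes r :: real
  assumes H1g: "graph_on n H1" and H2g: "graph_on n H2" and dis: "H1 \<inter> H2 = {}"
    and D0: "real (dsum n d) - 2 * real (card H1) > 0"
    and r1: "r \<le> 1"
    and sr: "2 * real (Jd n d) + 6 * real (dmax n d) + 2 * real (max_deg n H2) * real (dmax n d)
              + real (dmax_on d (touched H1)) ^ 2 \<le> r * (real (dsum n d) - 2 * real (card H1))"
    and KH: "K \<subseteq> H1"
  shows "real (card {G \<in> graphs_deg n d. K \<subseteq> G \<and> G \<inter> H2 = {}}) \<ge>
     real (card {G \<in> graphs_deg n d. {} \<subseteq> G \<and> G \<inter> H2 = {}}) * (\<Prod>i\<in>{1..n}. ffall (d i) (vdeg K i))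
     * (\<Prod>j\<in>{1..card K}. (1 - r) / (real (dsum n d) - 2 * real j + 2))"
proof -
  have fH1: "finite H1" using H1g fin_graph unfolding graph_on_def by blast
  have fK: "finite K" using KH fH1 finite_subset by blast
  define M where "M = real (dsum n d)"
  define D where "D = M - 2 * real (card H1)"
  define s where "s = 2 * real (Jd n d) + 2 * real (dmax n d) + 2 * real (max_deg n H2) * real (dmax n d)"
  define Dp where "Dp = real (dmax_on d (touched H1))"
  define c0 where "c0 = real (card {G \<in> graphs_deg n d. {} \<subseteq> G \<and> G \<inter> H2 = {}})"
  have D0': "D > 0" using D0 unfolding D_def M_def .
  have s0: "s \<ge> 0" unfolding s_def by simp
  have sDp: "s + Dp ^ 2 \<le> r * D" using sr unfolding s_def Dp_def D_def M_def by simp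
  have r0: "r \<ge> 0"
  proof (rule ccontr)
    assume "\<not> r \<ge> 0"
    then have "r * D < 0" using D0' by (simp add: mult_neg_pos)
    moreover have "s + Dp ^ 2 \<ge> 0" using s0 by simp
    ultimately show False using sDp by linarith
  qed
  have touched_fin: "finite (touched H1)"
  proof -
    have "touched H1 \<subseteq> {1..n}" unfolding touched_def using H1g unfolding graph_on_def all_edges_def by auto
    then show ?thesis using finite_subset by blast
  qed
  have dDp: "real (d v) \<le> Dp" if "v \<in> touched H1" for v
    unfolding Dp_def dmax_on_def using that touched_fin by (simp add: Max_ge_iff)
  show ?thesis using fK KH unfolding M_def[symmetric]
  proof (induction K rule: finite_subset_induct')
    case empty
    then show ?case by (simp add: vdeg_def ffall_def)
  next
    case (insert e K)
    have eH1: "e \<in> all_edges n" using insert.hyps(2) H1g unfolding graph_on_def by blast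
    obtain a b where e: "e = {a,b}" "a \<noteq> b" "a \<in> {1..n}" "b \<in> {1..n}" using edge_pair[OF eH1] by blast
    interpret S: swsetup n d H2 K a b
    proof
      show "H2 \<subseteq> all_edges n" using H2g unfolding graph_on_def .
      show "K \<subseteq> all_edges n" using insert.hyps(3) H1g unfolding graph_on_def by blast
      show "K \<inter> H2 = {}" using insert.hyps(3) dis by blast
      show "{a,b} \<in> all_edges n" using eH1 e by simp
      show "{a,b} \<notin> K" using insert.hyps(4) e by simp
      show "{a,b} \<notin> H2" using insert.hyps(2) dis e by blast
    qed
    have CCe: "S.CC = {G \<in> graphs_deg n d. K \<subseteq> G \<and> G \<inter> H2 = {}}" unfolding S.CC_def ..
    have AAe: "S.AA = {G \<in> graphs_deg n d. insert e K \<subseteq> G \<and> G \<inter> H2 = {}}" unfolding S.AA_def S.CC_def e by auto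
    have cK: "card (insert e K) = Suc (card K)" using insert.hyps(1,4) by simp
    have cKh: "Suc (card K) \<le> card H1" using card_mono[OF fH1 insert_subset[THEN iffD2, OF conjI[OF insert.hyps(2,3)]]] cK by simp
    have MpD: "S.Mp \<ge> D + 2" unfolding S.Mp_def D_def M_def using cKh by simp
    have Mp0: "S.Mp > 0" using MpD D0' by linarith
    have Da: "real (d a) \<le> Dp" and Db: "real (d b) \<le> Dp"
    proof -
      have "a \<in> touched H1" "b \<in> touched H1" unfolding touched_def using insert.hyps(2) e(1) by auto
      then show "real (d a) \<le> Dp" "real (d b) \<le> Dp" using dDp by auto
    qed
    have sr': "s + Dp ^ 2 \<le> r * S.Mp"
    proof -
      have "r * D \<le> r * S.Mp" using MpD r0 by (intro mult_left_mono) auto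
      then show ?thesis using sDp by linarith
    qed
    have step: "real (card S.AA) \<ge> real (card S.CC) * ((real (d a) - real (vdeg K a)) * (real (d b) - real (vdeg K b)) * (1 - r) / S.Mp)"
      using S.step_b_final[OF Mp0 Da Db sr'[unfolded s_def] r1] .
    define w where "w = (real (d a) - real (vdeg K a)) * (real (d b) - real (vdeg K b))"
    define fk where "fk = (\<Prod>i\<in>{1..n}. ffall (d i) (vdeg K i))"
    define gk where "gk = (\<Prod>j\<in>{1..card K}. (1 - r) / (M - 2 * real j + 2))"
    have Mpe: "S.Mp = M - 2 * real (card K)" unfolding S.Mp_def M_def ..
    have rhs: "c0 * (\<Prod>i\<in>{1..n}. ffall (d i) (vdeg (insert e K) i)) * (\<Prod>j\<in>{1..card (insert e K)}. (1 - r) / (M - 2 * real j + 2))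
        = (c0 * fk * gk) * (w * (1 - r) / S.Mp)"
    proof -
      have "c0 * (\<Prod>i\<in>{1..n}. ffall (d i) (vdeg (insert e K) i)) * (\<Prod>j\<in>{1..card (insert e K)}. (1 - r) / (M - 2 * real j + 2))
        = c0 * (fk * w) * (gk * ((1 - r) / S.Mp))"
        unfolding cK unfolding e(1) fK_insert[OF e(2,3,4) insert.hyps(1) insert.hyps(4)[unfolded e]] g_insert fk_def gk_def w_def Mpe ..
      also have "\<dots> = (c0 * fk * gk) * (w * (1 - r) / S.Mp)" by (simp add: algebra_simps)
      finally show ?thesis .
    qed
    have IH: "c0 * fk * gk \<le> real (card S.CC)" using insert.IH unfolding CCe c0_def fk_def gk_def .
    show ?case
    proof (cases "S.CC = {}")
      case True
      have gk0: "gk \<ge> 0" unfolding gk_def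
      proof (intro prod_nonneg)
        fix j assume "j \<in> {1..card K}"
        then have "M - 2 * real j + 2 > 0" using MpD D0' Mpe by auto
        then show "(1 - r) / (M - 2 * real j + 2) \<ge> 0" using r1 by simp
      qed
      have "c0 * fk * gk \<ge> 0" unfolding c0_def fk_def using fK_nonneg gk0 gk_def by simp
      then have "c0 * fk * gk = 0" using IH True by simp
      then have "(c0 * fk * gk) * (w * (1 - r) / S.Mp) = 0" by (metis mult_zero_left)
      then have "(c0 * fk * gk) * (w * (1 - r) / S.Mp) \<le> real (card S.AA)" by linarith
      then show ?thesis unfolding c0_def[symmetric] AAe[symmetric] rhs .
    next
      case False
      have w0: "w \<ge> 0" using S.wnonneg[OF False] unfolding w_def by simp
      have q0: "w * (1 - r) / S.Mp \<ge> 0" using w0 r1 Mp0 by simp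
      have "(c0 * fk * gk) * (w * (1 - r) / S.Mp) \<le> real (card S.CC) * (w * (1 - r) / S.Mp)"
        using IH q0 by (rule mult_right_mono)
      also have "\<dots> \<le> real (card S.AA)" using step unfolding w_def by simp
      finally have fin: "(c0 * fk * gk) * (w * (1 - r) / S.Mp) \<le> real (card S.AA)" .
      show ?thesis unfolding c0_def[symmetric] AAe[symmetric] rhs by (rule fin)
    qed
  qed
qed


theorem theorem1p4:
  fixes n :: nat and d :: "nat \<Rightarrow> nat" and H1 H2 :: "nat set set"
  assumes "graphical n d"
    and "graph_on n H1" and "graph_on n H2" and "H1 \<inter> H2 = {}"
    and "{G \<in> graphs_deg n d. G \<inter> H2 = {}} \<noteq> {}"
  shows
   "(real (dsum n d) - 2 * real (num_edges H1) > 0 \<and> bigR n d H1 H2 \<le> 1 \<longrightarrow>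
      cond_prob n d H1 H2 \<le>
        (\<Prod>i\<in>{1..n}. ffall (d i) (vdeg H1 i)) *
        (\<Prod>j\<in>{1..num_edges H1}. (1 + bigR n d H1 H2) / (real (dsum n d) - 2 * real j + 2)))
    \<and>
    (real (dsum n d) - 2 * real (num_edges H1) > 0 \<and> smallr n d H1 H2 \<le> 1 \<longrightarrow>
      cond_prob n d H1 H2 \<ge>
        (\<Prod>i\<in>{1..n}. ffall (d i) (vdeg H1 i)) *
        (\<Prod>j\<in>{1..num_edges H1}. (1 - smallr n d H1 H2) / (real (dsum n d) - 2 * real j + 2)))"
proof -
  note H1g = assms(2) and H2g = assms(3) and dis = assms(4)
  define c0 where "c0 = real (card {G \<in> graphs_deg n d. G \<inter> H2 = {}})"
  have ce: "{G \<in> graphs_deg n d. {} \<subseteq> G \<and> G \<inter> H2 = {}} = {G \<in> graphs_deg n d. G \<inter> H2 = {}}" by simp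
  have c0pos: "c0 > 0"
  proof -
    have "{G \<in> graphs_deg n d. G \<inter> H2 = {}} \<subseteq> Pow (all_edges n)"
      unfolding graphs_deg_def graph_on_def by auto
    then have "finite {G \<in> graphs_deg n d. G \<inter> H2 = {}}" using fin_all_edges finite_subset by blast
    then show ?thesis unfolding c0_def using assms(5) by (simp add: card_gt_0_iff)
  qed
  have cp: "cond_prob n d H1 H2 = real (card {G \<in> graphs_deg n d. H1 \<subseteq> G \<and> G \<inter> H2 = {}}) / c0"
    unfolding cond_prob_def c0_def ..
  define D where "D = real (dsum n d) - 2 * real (card H1)"
  have ne: "num_edges H1 = card H1" unfolding num_edges_def ..
  show ?thesis
  proof (intro conjI impI)
    assume a: "real (dsum n d) - 2 * real (num_edges H1) > 0 \<and> bigR n d H1 H2 \<le> 1"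
    define R where "R = bigR n d H1 H2"
    have D0: "D > 0" using a unfolding D_def ne by simp
    define X where "X = 6 * real (Jd n d) + 2 * real (dmax n d) * (8 + 2 * real (max_deg n H2))"
    define Y where "Y = 4 * real (num_edges H2) * real (dmax n d) ^ 2"
    have Re: "R = X / D + Y / D ^ 2" unfolding R_def bigR_def X_def Y_def D_def ne ..
    have Y0: "Y / D ^ 2 \<ge> 0" unfolding Y_def by simp
    have X0: "X / D \<ge> 0" unfolding X_def using D0 by simp
    have R0: "R \<ge> 0" using Re X0 Y0 by linarith
    have "R * D \<ge> X / D * D" using Re Y0 D0 by (intro mult_right_mono) auto
    then have RDX: "R * D \<ge> X" using D0 by simp
    have sR: "2 * (2 * real (Jd n d) + 2 * real (dmax n d) + 2 * real (max_deg n H2) * real (dmax n d))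
              \<le> R * (real (dsum n d) - 2 * real (card H1))"
      using RDX unfolding X_def D_def by (simp add: algebra_simps)
    have R1: "R \<le> 1" using a unfolding R_def by simp
    have "real (card {G \<in> graphs_deg n d. H1 \<subseteq> G \<and> G \<inter> H2 = {}}) \<le>
     real (card {G \<in> graphs_deg n d. {} \<subseteq> G \<and> G \<inter> H2 = {}}) * (\<Prod>i\<in>{1..n}. ffall (d i) (vdeg H1 i))
     * (\<Prod>j\<in>{1..card H1}. (1 + R) / (real (dsum n d) - 2 * real j + 2))"
      by (rule ind_a[OF H1g H2g dis D0[unfolded D_def] R0 R1 sR order_refl])
    then have "real (card {G \<in> graphs_deg n d. H1 \<subseteq> G \<and> G \<inter> H2 = {}}) \<le>
       c0 * ((\<Prod>i\<in>{1..n}. ffall (d i) (vdeg H1 i)) * (\<Prod>j\<in>{1..card H1}. (1 + R) / (real (dsum n d) - 2 * real j + 2)))"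
      unfolding ce c0_def[symmetric] by (simp add: mult.assoc)
    then show "cond_prob n d H1 H2 \<le>
        (\<Prod>i\<in>{1..n}. ffall (d i) (vdeg H1 i)) *
        (\<Prod>j\<in>{1..num_edges H1}. (1 + bigR n d H1 H2) / (real (dsum n d) - 2 * real j + 2))"
      unfolding cp ne R_def[symmetric] using c0pos by (simp add: divide_le_eq mult.commute)
  next
    assume a: "real (dsum n d) - 2 * real (num_edges H1) > 0 \<and> smallr n d H1 H2 \<le> 1"
    define r where "r = smallr n d H1 H2"
    have D0: "D > 0" using a unfolding D_def ne by simp
    define X where "X = 2 * real (Jd n d) + 6 * real (dmax n d) + 2 * real (max_deg n H2) * real (dmax n d)
        + real (dmax_on d (touched H1)) ^ 2"
    have re: "r = X / D" unfolding r_def smallr_def X_def D_def ne ..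
    have sr: "X \<le> r * D" unfolding re using D0 by simp
    have r1: "r \<le> 1" using a unfolding r_def by simp
    have "real (card {G \<in> graphs_deg n d. H1 \<subseteq> G \<and> G \<inter> H2 = {}}) \<ge>
     real (card {G \<in> graphs_deg n d. {} \<subseteq> G \<and> G \<inter> H2 = {}}) * (\<Prod>i\<in>{1..n}. ffall (d i) (vdeg H1 i))
     * (\<Prod>j\<in>{1..card H1}. (1 - r) / (real (dsum n d) - 2 * real j + 2))"
      by (rule ind_b[OF H1g H2g dis D0[unfolded D_def] r1 sr[unfolded X_def D_def] order_refl])
    then have "real (card {G \<in> graphs_deg n d. H1 \<subseteq> G \<and> G \<inter> H2 = {}}) \<ge>
       c0 * ((\<Prod>i\<in>{1..n}. ffall (d i) (vdeg H1 i)) * (\<Prod>j\<in>{1..card H1}. (1 - r) / (real (dsum n d) - 2 * real j + 2)))"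
      unfolding ce c0_def[symmetric] by (simp add: mult.assoc)
    then show "cond_prob n d H1 H2 \<ge>
        (\<Prod>i\<in>{1..n}. ffall (d i) (vdeg H1 i)) *
        (\<Prod>j\<in>{1..num_edges H1}. (1 - smallr n d H1 H2) / (real (dsum n d) - 2 * real j + 2))"
      unfolding cp ne r_def[symmetric] using c0pos by (simp add: le_divide_eq mult.commute)
  qed
qed


end
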